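(* Let $\mathcal{D}$ be a geographic domain (a measurable subset of $\mathbb{R}^d$, e.g. $d=2$) with finite area $|\mathcal{D}|=\int_{\mathcal{D}}1\,dz>0$, and let $x:\mathcal{D}\to\mathbb{R}^p$ be a feature map. Suppose we observe $n_1$ presence points $z_1,\dots,z_{n_1}\in\mathcal{D}$ (indexed by $y_i=1$) and $n_0$ background points $z_{n_1+1},\dots,z_{n_1+n_0}\in\mathcal{D}$ (indexed by $y_i=0$), with $x_i=x(z_i)$. Let $\{f_\theta:\theta\in\mathbb{R}^d\}$ be a parametric family of real-valued functions and $J(\theta)$ a penalty function. Define $$g_1(\alpha,\theta)=\Big(\sum_{i:y_i=1}\alpha+f_\theta(x_i)\Big)-\int_{\mathcal{D}}e^{\alpha+f_\theta(x(z))}\,dz-J(\theta)-\log n_1!,$$ the penalized log-likelihood of an inhomogeneous Poisson process with intensity $e^{\alpha+f_\theta(x(z))}$, and $$g_2(\theta)=\sum_{i:y_i=1}f_\theta(x_i)-n_1\log\Big(\int_{\mathcal{D}}e^{f_\theta(x(z))}\,dz\Big)-J(\theta),$$ the penalized log-likelihood of an i.i.d. sample with density proportional to $e^{f_\theta(x(z))}$ (assuming the integrals are finite). Then $\theta$ maximizes $g_2$ if and only if $(\alpha,\theta)$ maximizes $g_1$ for some $\alpha\in\mathbb{R}$. The same conclusion holds if the integrals $\int_{\mathcal{D}}e^{\alpha+f_\theta(x(z))}dz$ and $\int_{\mathcal{D}}e^{f_\theta(x(z))}dz$ are replaced by the background-sample sums $\frac{|\mathcal{D}|}{n_0}\sum_{i:y_i=0}e^{\alpha+f_\theta(x_i)}$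 and $\frac{|\mathcal{D}|}{n_0}\sum_{i:y_i=0}e^{f_\theta(x_i)}$ respectively.
   Context: Here $g_1$ is the (penalized) inhomogeneous Poisson process (IPP) log-likelihood and $g_2$ is the (penalized) Maxent log-likelihood; the intercept $\alpha$ is not penalized. *)

theory Defs
  imports "HOL-Analysis.Analysis"
begin

text \<open>Observations: points z 1, ..., z (n1 + n0); the first n1 are presence points
  (y_i = 1), the remaining n0 are background points (y_i = 0).\<close>

definition presence_idx :: "nat \<Rightarrow> nat set" where
  "presence_idx n1 = {1..n1}"

definition background_idx :: "nat \<Rightarrow> nat \<Rightarrow> nat set" where
  "background_idx n1 n0 = {n1+1..n1+n0}"

definition g1 :: "'a::euclidean_space set \<Rightarrow> ('a \<Rightarrow> 'b) \<Rightarrow> ('c \<Rightarrow> 'b \<Rightarrow> real) \<Rightarrow> ('c \<Rightarrow> real)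
    \<Rightarrow> (nat \<Rightarrow> 'a) \<Rightarrow> nat \<Rightarrow> real \<Rightarrow> 'c \<Rightarrow> real" where
  "g1 D xf f J z n1 \<alpha> \<theta> =
     (\<Sum>i\<in>presence_idx n1. \<alpha> + f \<theta> (xf (z i)))
     - (LINT u:D|lebesgue. exp (\<alpha> + f \<theta> (xf u)))
     - J \<theta> - ln (fact n1)"

definition g2 :: "'a::euclidean_space set \<Rightarrow> ('a \<Rightarrow> 'b) \<Rightarrow> ('c \<Rightarrow> 'b \<Rightarrow> real) \<Rightarrow> ('c \<Rightarrow> real)
    \<Rightarrow> (nat \<Rightarrow> 'a) \<Rightarrow> nat \<Rightarrow> 'c \<Rightarrow> real" where
  "g2 D xf f J z n1 \<theta> =
     (\<Sum>i\<in>presence_idx n1. f \<theta> (xf (z i)))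
     - real n1 * ln (LINT u:D|lebesgue. exp (f \<theta> (xf u)))
     - J \<theta>"

definition g1_bg :: "'a::euclidean_space set \<Rightarrow> ('a \<Rightarrow> 'b) \<Rightarrow> ('c \<Rightarrow> 'b \<Rightarrow> real) \<Rightarrow> ('c \<Rightarrow> real)
    \<Rightarrow> (nat \<Rightarrow> 'a) \<Rightarrow> nat \<Rightarrow> nat \<Rightarrow> real \<Rightarrow> 'c \<Rightarrow> real" where
  "g1_bg D xf f J z n1 n0 \<alpha> \<theta> =
     (\<Sum>i\<in>presence_idx n1. \<alpha> + f \<theta> (xf (z i)))
     - measure lebesgue D / real n0 * (\<Sum>i\<in>background_idx n1 n0. exp (\<alpha> + f \<theta> (xf (z i))))
     - J \<theta> - ln (fact n1)"

definition g2_bg :: "'a::euclidean_space set \<Rightarrow> ('a \<Rightarrow> 'b) \<Rightarrow> ('c \<Rightarrow> 'b \<Rightarrow> real) \<Rightarrow> ('c \<Rightarrow> real)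
    \<Rightarrow> (nat \<Rightarrow> 'a) \<Rightarrow> nat \<Rightarrow> nat \<Rightarrow> 'c \<Rightarrow> real" where
  "g2_bg D xf f J z n1 n0 \<theta> =
     (\<Sum>i\<in>presence_idx n1. f \<theta> (xf (z i)))
     - real n1 * ln (measure lebesgue D / real n0 * (\<Sum>i\<in>background_idx n1 n0. exp (f \<theta> (xf (z i)))))
     - J \<theta>"

end

theory Submission
  imports Defs
begin

lemma abstract_equiv:
  fixes S I J :: "'c \<Rightarrow> real" and n c :: real
  assumes n: "n > 0" and I: "\<And>t. I t > 0"
  shows "(\<forall>t'. S t' - n * ln (I t') - J t' \<le> S t - n * ln (I t) - J t) \<longleftrightarrow>
         (\<exists>a. \<forall>a' t'. n*a' + S t' - exp a' * I t' - J t' - c \<le> n*a + S t - exp a * I t - J t - c)"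
proof -
  define G1 where "G1 a t = n*a + S t - exp a * I t - J t - c" for a t
  define G2 where "G2 t = S t - n * ln (I t) - J t" for t
  define K where "K = n * ln n - n - c"
  have up: "G1 a t \<le> G2 t + K" for a t
  proof -
    define x where "x = exp a * I t / n"
    have xp: "x > 0" using n I[of t] by (simp add: x_def)
    have lx: "ln x = a + ln (I t) - ln n" using n I[of t]
      by (simp add: x_def ln_div ln_mult)
    have "ln x \<le> x - 1" using xp by (rule ln_le_minus_one)
    hence "n * ln x \<le> n * (x - 1)" using n by simp
    moreover have "n * x = exp a * I t" using n by (simp add: x_def)
    ultimately have "n * (a + ln (I t) - ln n) \<le> exp a * I t - n"
      by (simp only: lx right_diff_distrib mult_1_right)
    thus ?thesis by (simp add: G1_def G2_def K_def algebra_simps)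
  qed
  have att: "G1 (ln (n / I t)) t = G2 t + K" for t
  proof -
    define L where "L = ln (n / I t)"
    have e: "exp L * I t = n" using n I[of t] by (simp add: L_def)
    have l: "L = ln n - ln (I t)" using n I[of t] by (simp add: ln_div L_def)
    have "G1 L t = n*L + S t - exp L * I t - J t - c" by (simp add: G1_def)
    also have "\<dots> = n*(ln n - ln (I t)) + S t - n - J t - c" by (simp only: e) (simp only: l)
    also have "\<dots> = G2 t + K" by (simp add: G2_def K_def algebra_simps)
    finally show ?thesis by (simp add: L_def)
  qed
  have "(\<forall>t'. G2 t' \<le> G2 t) \<longleftrightarrow> (\<exists>a. \<forall>a' t'. G1 a' t' \<le> G1 a t)"
  proof
    assume h: "\<forall>t'. G2 t' \<le> G2 t"
    show "\<exists>a. \<forall>a' t'. G1 a' t' \<le> G1 a t"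
    proof (intro exI allI)
      fix a' t'
      have "G1 a' t' \<le> G2 t' + K" by (rule up)
      also have "\<dots> \<le> G2 t + K" using h by simp
      also have "\<dots> = G1 (ln (n / I t)) t" by (rule att[symmetric])
      finally show "G1 a' t' \<le> G1 (ln (n / I t)) t" .
    qed
  next
    assume "\<exists>a. \<forall>a' t'. G1 a' t' \<le> G1 a t"
    then obtain a where h: "\<And>a' t'. G1 a' t' \<le> G1 a t" by blast
    show "\<forall>t'. G2 t' \<le> G2 t"
    proof
      fix t'
      have "G2 t' + K = G1 (ln (n / I t')) t'" by (rule att[symmetric])
      also have "\<dots> \<le> G1 a t" by (rule h)
      also have "\<dots> \<le> G2 t + K" by (rule up)
      finally show "G2 t' \<le> G2 t" by simp
    qed
  qed
  thus ?thesis by (simp add: G1_def G2_def)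
qed

lemma sum_pres: "(\<Sum>i\<in>presence_idx n1. \<alpha> + g i) = real n1 * \<alpha> + (\<Sum>i\<in>presence_idx n1. g i)"
  by (simp add: sum.distrib presence_idx_def)

theorem proposition1:
  fixes D :: "'a::euclidean_space set"
    and xf :: "'a \<Rightarrow> 'b::euclidean_space"
    and f :: "'c::euclidean_space \<Rightarrow> 'b \<Rightarrow> real"
    and J :: "'c \<Rightarrow> real"
    and z :: "nat \<Rightarrow> 'a"
    and n1 n0 :: nat
  assumes D_meas: "D \<in> sets lebesgue"
    and D_fin: "emeasure lebesgue D < \<infinity>"
    and D_pos: "measure lebesgue D > 0"
    and n1_pos: "n1 \<ge> 1"
    and n0_pos: "n0 \<ge> 1"
    and z_in_D: "\<And>i. i \<in> {1..n1+n0} \<Longrightarrow> z i \<in> D"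
    and int_fin: "\<And>\<theta>. set_integrable lebesgue D (\<lambda>u. exp (f \<theta> (xf u)))"
  shows "(\<forall>\<theta>. (\<forall>\<theta>'. g2 D xf f J z n1 \<theta>' \<le> g2 D xf f J z n1 \<theta>) \<longleftrightarrow>
              (\<exists>\<alpha>. \<forall>\<alpha>' \<theta>'. g1 D xf f J z n1 \<alpha>' \<theta>' \<le> g1 D xf f J z n1 \<alpha> \<theta>))
       \<and> (\<forall>\<theta>. (\<forall>\<theta>'. g2_bg D xf f J z n1 n0 \<theta>' \<le> g2_bg D xf f J z n1 n0 \<theta>) \<longleftrightarrow>
              (\<exists>\<alpha>. \<forall>\<alpha>' \<theta>'. g1_bg D xf f J z n1 n0 \<alpha>' \<theta>' \<le> g1_bg D xf f J z n1 n0 \<alpha> \<theta>))"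
proof
  define I where "I t = (LINT u:D|lebesgue. exp (f t (xf u)))" for t
  define S where "S t = (\<Sum>i\<in>presence_idx n1. f t (xf (z i)))" for t
  have Ipos: "I t > 0" for t
  proof -
    have int: "integrable lebesgue (\<lambda>u. indicator D u * exp (f t (xf u)))"
      using int_fin[of t] by (simp add: set_integrable_def)
    have ge: "I t \<ge> 0" unfolding I_def set_lebesgue_integral_def
      by (rule integral_nonneg_AE) (simp add: indicator_def)
    moreover have "I t \<noteq> 0"
    proof
      assume "I t = 0"
      hence "AE u in lebesgue. indicator D u * exp (f t (xf u)) = 0"
        using integral_nonneg_eq_0_iff_AE[OF int] unfolding I_def set_lebesgue_integral_def
        by (simp add: mult.commute)
      hence "AE u in lebesgue. u \<notin> D" by eventually_elim (auto simp: indicator_def)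
      hence "emeasure lebesgue D = 0"
        using AE_iff_measurable[OF D_meas, of "\<lambda>u. u \<notin> D"] by simp
      thus False using D_pos by (simp add: measure_def)
    qed
    ultimately show ?thesis by simp
  qed
  have g1eq: "g1 D xf f J z n1 a t = real n1 * a + S t - exp a * I t - J t - ln (fact n1)" for a t
  proof -
    have "(LINT u:D|lebesgue. exp (a + f t (xf u))) = exp a * I t"
      unfolding I_def by (simp add: exp_add set_integral_mult_right)
    thus ?thesis by (simp add: g1_def sum_pres S_def)
  qed
  have g2eq: "g2 D xf f J z n1 t = S t - real n1 * ln (I t) - J t" for t
    by (simp add: g2_def S_def I_def)
  show "\<forall>\<theta>. (\<forall>\<theta>'. g2 D xf f J z n1 \<theta>' \<le> g2 D xf f J z n1 \<theta>) \<longleftrightarrow>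
              (\<exists>\<alpha>. \<forall>\<alpha>' \<theta>'. g1 D xf f J z n1 \<alpha>' \<theta>' \<le> g1 D xf f J z n1 \<alpha> \<theta>)"
    unfolding g1eq g2eq
    using abstract_equiv[where n="real n1" and I=I and S=S and J=J and c="ln (fact n1)"] n1_pos Ipos by simp
  define B where "B t = measure lebesgue D / real n0 * (\<Sum>i\<in>background_idx n1 n0. exp (f t (xf (z i))))" for t
  have Bpos: "B t > 0" for t
  proof -
    have "(\<Sum>i\<in>background_idx n1 n0. exp (f t (xf (z i)))) > 0"
      using n0_pos by (intro sum_pos) (auto simp: background_idx_def)
    thus ?thesis using D_pos n0_pos by (simp add: B_def)
  qed
  have g1beq: "g1_bg D xf f J z n1 n0 a t = real n1 * a + S t - exp a * B t - J t - ln (fact n1)" for a t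
    by (simp add: g1_bg_def sum_pres S_def B_def exp_add sum_distrib_left algebra_simps)
  have g2beq: "g2_bg D xf f J z n1 n0 t = S t - real n1 * ln (B t) - J t" for t
    by (simp add: g2_bg_def S_def B_def)
  show "\<forall>\<theta>. (\<forall>\<theta>'. g2_bg D xf f J z n1 n0 \<theta>' \<le> g2_bg D xf f J z n1 n0 \<theta>) \<longleftrightarrow>
              (\<exists>\<alpha>. \<forall>\<alpha>' \<theta>'. g1_bg D xf f J z n1 n0 \<alpha>' \<theta>' \<le> g1_bg D xf f J z n1 n0 \<alpha> \<theta>)"
    unfolding g1beq g2beq
    using abstract_equiv[where n="real n1" and I=B and S=S and J=J and c="ln (fact n1)"] n1_pos Bpos by simp
qed

end
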